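(* Let $m,n$ be nonnegative integers with $0\leqslant m\leqslant n$, let $\varepsilon\in\{+1,-1\}$, and let $z\in\mathbb{C}\setminus(-\infty,1]$. Then \begin{align*} \frac{\mathrm{d}^{m}}{\mathrm{d}z^{m}}\bigl[P_{n}(z)\ln(z+\varepsilon)\bigr] &= \frac{(2m)!}{2^{m}m!}C_{n-m}^{(m+1/2)}(z)\ln(z+\varepsilon) -\frac{(2m)!}{2^{m}m!}[\psi(n+m+1)-2\psi(n+1)+\psi(n-m+1)]C_{n-m}^{(m+1/2)}(z)\\ &\quad -\frac{\varepsilon^{n+m}}{2^{m}}\sum_{k=0}^{n-m}\varepsilon^{k}\frac{(k+n+m)!\,\psi(k+m+1)}{k!\,(k+m)!\,(n-m-k)!}\left(\frac{z-\varepsilon}{2}\right)^{k}\\ &\quad +\varepsilon^{n}\frac{(n+m)!}{(n-m)!}(z+\varepsilon)^{-m}\sum_{k=0}^{n}\varepsilon^{k}\frac{(k+n)!\,\psi(k+m+1)}{k!\,(k+m)!\,(n-k)!}\left(\frac{z-\varepsilon}{2}\right)^{k}. \end{align*}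
   Context: $P_n(z)$ denotes the Legendre polynomial of degree $n$. $C_{j}^{(\alpha)}(z)$ denotes the Gegenbauer (ultraspherical) polynomial of degree $j$ and parameter $\alpha$. $\psi(\zeta)=\Gamma'(\zeta)/\Gamma(\zeta)$ is the digamma function. The complex plane is cut along the real axis from $-\infty$ to $+1$; for $z\in\mathbb{C}\setminus(-\infty,1]$, $\ln(z\pm1)$ denotes the principal branch of the logarithm. The case $\varepsilon=+1$ concerns $\ln(z+1)$ and the case $\varepsilon=-1$ concerns $\ln(z-1)$. *)

theory Defs
  imports "HOL-Analysis.Analysis"
begin

definition legendreP :: "nat \<Rightarrow> complex \<Rightarrow> complex" where
  "legendreP n z = (\<Sum>k\<le>n div 2. (-1)^k * of_nat (fact (2*n - 2*k))
      / (2^n * of_nat (fact k) * of_nat (fact (n - k)) * of_nat (fact (n - 2*k))) * z^(n - 2*k))"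

text \<open>Gegenbauer polynomial C_j^(alpha): sum over k of (-1)^k Gamma(j-k+alpha)/(Gamma(alpha) k! (j-2k)!) (2z)^(j-2k),
  with Gamma(j-k+alpha)/Gamma(alpha) written as the Pochhammer symbol (alpha)_(j-k).\<close>
definition gegenbauerC :: "nat \<Rightarrow> complex \<Rightarrow> complex \<Rightarrow> complex" where
  "gegenbauerC j \<alpha> z = (\<Sum>k\<le>j div 2. (-1)^k * pochhammer \<alpha> (j - k)
      / (of_nat (fact k) * of_nat (fact (j - 2*k))) * (2*z)^(j - 2*k))"

end

theory Submission
  imports Defs "HOL-Computational_Algebra.Polynomial"
begin


lemma poch_half: "pochhammer (1/2::complex) j = of_nat (fact (2*j)) / (4^j * of_nat (fact j))"
proof -
  have "pochhammer (2 * (1/2::complex)) (2 * j) = of_nat (2^(2*j)) * pochhammer (1/2) j * pochhammer (1/2+1/2) j"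
    by (rule pochhammer_double)
  then have "fact (2*j) = (4::complex)^j * pochhammer (1/2) j * fact j"
    by (simp add: pochhammer_fact[symmetric] power_mult)
  then show ?thesis by (simp add: field_simps)
qed

lemma legendre_gegenbauer: "legendreP n z = gegenbauerC n (1/2) z"
  unfolding legendreP_def gegenbauerC_def
proof (rule sum.cong[OF refl])
  fix k assume "k \<in> {..n div 2}"
  then have k: "2*k \<le> n" by auto
  have e1: "2*n - 2*k = 2*(n-k)" by simp
  have e3: "2*(n-k) = n + (n - 2*k)" using k by simp
  have p: "(4::complex)^(n-k) = 2^n * 2^(n-2*k)"
  proof -
    have "(4::complex)^(n-k) = 2^(2*(n-k))" by (simp add: power_mult)
    also have "\<dots> = 2^n * 2^(n-2*k)" unfolding e3 power_add ..
    finally show ?thesis .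
  qed
  show "(-1)^k * of_nat (fact (2*n - 2*k)) / (2^n * of_nat (fact k) * of_nat (fact (n - k)) * of_nat (fact (n - 2*k))) * z^(n - 2*k)
     = (-1)^k * pochhammer (1/2) (n - k) / (of_nat (fact k) * of_nat (fact (n - 2*k))) * (2*z)^(n - 2*k)"
    unfolding poch_half e1 using p by (simp add: power_mult_distrib field_simps)
qed




lemma gegen_deriv:
  "((\<lambda>z. gegenbauerC (Suc j) a z) has_field_derivative (2*a * gegenbauerC j (a+1) z)) (at z)"
proof -
  let ?c = "\<lambda>k. (-1)^k * pochhammer a (Suc j - k) / (of_nat (fact k) * of_nat (fact (Suc j - 2*k)))"
  have d0: "((\<lambda>z. ?c k * (2*z)^(Suc j - 2*k)) has_field_derivative
      ?c k * (of_nat (Suc j - 2*k) * (2*z)^(Suc j - 2*k - 1) * 2)) (at z)" for k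
  proof -
    have p: "((\<lambda>z. (2*z)^(Suc j - 2*k)) has_field_derivative of_nat (Suc j - 2*k)*((2*1)*(2*z)^(Suc j - 2*k - Suc 0))) (at z)"
      by (rule DERIV_power[OF DERIV_cmult[OF DERIV_ident]])
    show ?thesis using DERIV_cmult[OF p, of "?c k"] by (simp add: ac_simps)
  qed
  have d: "((\<lambda>z. gegenbauerC (Suc j) a z) has_field_derivative
      (\<Sum>k\<le>Suc j div 2. ?c k * (of_nat (Suc j - 2*k) * (2*z)^(Suc j - 2*k - 1) * 2))) (at z)"
    unfolding gegenbauerC_def by (rule DERIV_sum, rule d0)
  have s1: "(\<Sum>k\<le>Suc j div 2. ?c k * (of_nat (Suc j - 2*k) * (2*z)^(Suc j - 2*k - 1) * 2))
        = (\<Sum>k\<le>j div 2. ?c k * (of_nat (Suc j - 2*k) * (2*z)^(Suc j - 2*k - 1) * 2))"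
  proof (rule sum.mono_neutral_right)
    show "\<forall>i\<in>{..Suc j div 2} - {..j div 2}. ?c i * (of_nat (Suc j - 2*i) * (2*z)^(Suc j - 2*i - 1) * 2) = 0"
    proof
      fix i assume "i \<in> {..Suc j div 2} - {..j div 2}"
      then have "Suc j - 2*i = 0" by auto
      then show "?c i * (of_nat (Suc j - 2*i) * (2*z)^(Suc j - 2*i - 1) * 2) = 0" by simp
    qed
  qed auto
  have s2: "(\<Sum>k\<le>j div 2. ?c k * (of_nat (Suc j - 2*k) * (2*z)^(Suc j - 2*k - 1) * 2))
       = 2*a * gegenbauerC j (a+1) z"
    unfolding gegenbauerC_def sum_distrib_left
  proof (rule sum.cong[OF refl])
    fix k assume "k \<in> {..j div 2}"
    then have k: "2*k \<le> j" by auto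
    then have e1: "Suc j - k = Suc (j - k)" "Suc j - 2*k = Suc (j - 2*k)" by auto
    define S where "S = (of_nat (Suc (j - 2*k)) :: complex)"
    have Snz: "S \<noteq> 0" unfolding S_def by (simp del: of_nat_Suc)
    have fS: "(of_nat (fact (Suc (j - 2*k))) :: complex) = S * of_nat (fact (j - 2*k))"
      unfolding S_def by (simp only: fact_Suc of_nat_mult of_nat_id)
    show "?c k * (of_nat (Suc j - 2*k) * (2*z)^(Suc j - 2*k - 1) * 2) =
      2 * a * ((- 1) ^ k * pochhammer (a + 1) (j - k) / (of_nat (fact k) * of_nat (fact (j - 2 * k))) * (2 * z) ^ (j - 2 * k))"
      unfolding e1 fS S_def[symmetric] using Snz by (simp add: pochhammer_rec field_simps)
  qed
  show ?thesis using d s1 s2 by simp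
qed

definition Pg :: "nat \<Rightarrow> nat \<Rightarrow> complex \<Rightarrow> complex" where
  "Pg n m z = of_nat (fact (2*m)) / (2^m * of_nat (fact m)) * gegenbauerC (n - m) (of_nat m + 1/2) z"

lemma Pg_0: "Pg n 0 z = legendreP n z"
  by (simp add: Pg_def legendre_gegenbauer)

lemma Pg_deriv:
  assumes "m < n"
  shows "((\<lambda>z. Pg n m z) has_field_derivative Pg n (Suc m) z) (at z)"
proof -
  have e: "n - m = Suc (n - Suc m)" using assms by simp
  have "((\<lambda>z. Pg n m z) has_field_derivative of_nat (fact (2*m)) / (2^m * of_nat (fact m)) *
     (2*(of_nat m + 1/2) * gegenbauerC (n - Suc m) (of_nat m + 1/2 + 1) z)) (at z)"
    unfolding Pg_def e by (intro DERIV_cmult gegen_deriv)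
  moreover have "of_nat (fact (2*m)) / (2^m * of_nat (fact m)) *
     (2*(of_nat m + 1/2) * gegenbauerC (n - Suc m) (of_nat m + 1/2 + 1) z) = Pg n (Suc m) z"
  proof -
    have a: "(of_nat m + 1/2 + 1 :: complex) = of_nat (Suc m) + 1/2" by simp
    have b: "of_nat (fact (2*m)) / (2^m * of_nat (fact m)) * (2*(of_nat m + 1/2)) =
       (of_nat (fact (2 * Suc m)) / (2^Suc m * of_nat (fact (Suc m))) :: complex)"
    proof -
      define S where "S = (of_nat (Suc m) :: complex)"
      have Snz: "S \<noteq> 0" unfolding S_def by (simp del: of_nat_Suc)
      have M: "(of_nat m :: complex) = S - 1" unfolding S_def by simp
      have "2 * Suc m = Suc (Suc (2*m))" by simp
      then have f: "(of_nat (fact (2 * Suc m)) :: complex) = (2*S) * ((2*S - 1) * of_nat (fact (2*m)))"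
        unfolding S_def by (simp only: fact_Suc of_nat_mult of_nat_id) (simp add: algebra_simps)
      have g: "(of_nat (fact (Suc m)) :: complex) = S * of_nat (fact m)"
        unfolding S_def by (simp only: fact_Suc of_nat_mult of_nat_id)
      have n1: "(of_nat (fact m) :: complex) \<noteq> 0" by simp
      show ?thesis unfolding f g M using n1 Snz by (simp add: field_simps)
    qed
    show ?thesis unfolding Pg_def a b[symmetric] by (rule mult.assoc[symmetric])
  qed
  ultimately show ?thesis by simp
qed




definition sp :: "(nat \<Rightarrow> complex) \<Rightarrow> nat \<Rightarrow> complex poly" where
  "sp c N = (\<Sum>k\<le>N. monom (c k) k)"

lemma poly_sp: "poly (sp c N) x = (\<Sum>k\<le>N. c k * x^k)"
  by (simp add: sp_def poly_sum poly_monom)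

lemma coeff_sp: "coeff (sp c N) j = (if j \<le> N then c j else 0)"
  by (simp add: sp_def coeff_sum coeff_monom)

lemma coeff_lin: "coeff ([:1,1:] * q) k = coeff q k + (if k = 0 then 0 else coeff q (k-1))"
  for q :: "complex poly" by (cases k) (simp_all add: mult_pCons_left)

definition cA :: "nat \<Rightarrow> nat \<Rightarrow> nat \<Rightarrow> complex" where
  "cA n m k = of_nat (fact (k + n + m)) * Digamma (of_nat (k + m + 1))
        / (of_nat (fact k) * of_nat (fact (k + m)) * of_nat (fact (n - m - k)))"
definition cB :: "nat \<Rightarrow> nat \<Rightarrow> nat \<Rightarrow> complex" where
  "cB n m k = of_nat (fact (k + n)) * Digamma (of_nat (k + m + 1))
        / (of_nat (fact k) * of_nat (fact (k + m)) * of_nat (fact (n - k)))"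
definition cH :: "nat \<Rightarrow> nat \<Rightarrow> nat \<Rightarrow> complex" where
  "cH n m k = of_nat (fact (k + n)) / (of_nat (fact k) * of_nat (fact (k + m)) * of_nat (fact (n - k)))"

lemma fact_Suc': "(of_nat (fact (Suc j)) :: complex) = of_nat (Suc j) * of_nat (fact j)"
  by (simp only: fact_Suc of_nat_mult of_nat_id)

lemma PA:
  assumes "m < n"
  shows "pderiv (sp (cA n m) (n - m)) = sp (cA n (Suc m)) (n - Suc m)"
proof (rule poly_eqI)
  fix j
  show "coeff (pderiv (sp (cA n m) (n - m))) j = coeff (sp (cA n (Suc m)) (n - Suc m)) j"
  proof (cases "Suc j \<le> n - m")
    case True
    define S where "S = (of_nat (Suc j) :: complex)"
    have Snz: "S \<noteq> 0" unfolding S_def by (simp del: of_nat_Suc)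
    have i: "Suc j + n + m = j + n + Suc m" "Suc j + m + 1 = j + Suc m + 1" "Suc j + m = j + Suc m"
       "n - m - Suc j = n - Suc m - j" by auto
    have "of_nat (Suc j) * cA n m (Suc j) = cA n (Suc m) j"
      unfolding cA_def i fact_Suc'[of j] S_def[symmetric] using Snz
      by (simp add: field_simps del: fact_Suc of_nat_fact)
    then show ?thesis using True by (simp add: coeff_pderiv coeff_sp)
  next
    case False
    then have "\<not> j \<le> n - Suc m" using assms by auto
    then show ?thesis using False by (simp add: coeff_pderiv coeff_sp)
  qed
qed

lemma PH_lt:
  assumes "k < n" "m < n"
  shows "of_nat (Suc k) * cH n m (Suc k) + of_nat k * cH n m k - of_nat m * cH n m k
       = of_nat ((n+m+1)*(n-m)) * cH n (Suc m) k"
proof -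
  define j where "j = n - Suc k"
  have n: "n = k + Suc j" using assms(1) unfolding j_def by simp
  have i: "Suc k + n = Suc (k+n)" "Suc k + m = Suc (k+m)" "n - Suc k = j" "n - k = Suc j" "k + Suc m = Suc (k+m)"
    using n by auto
  define A where "A = (of_nat (fact (k+n)) :: complex)"
  define B where "B = (of_nat (fact k) :: complex)"
  define C where "C = (of_nat (fact (k+m)) :: complex)"
  define J where "J = (of_nat (fact j) :: complex)"
  define s1 where "s1 = (of_nat (Suc (k+n)) :: complex)"
  define s2 where "s2 = (of_nat (Suc k) :: complex)"
  define s3 where "s3 = (of_nat (Suc (k+m)) :: complex)"
  define s4 where "s4 = (of_nat (Suc j) :: complex)"
  have nz: "A \<noteq> 0" "B \<noteq> 0" "C \<noteq> 0" "J \<noteq> 0" "s1 \<noteq> 0" "s2 \<noteq> 0" "s3 \<noteq> 0" "s4 \<noteq> 0"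
    unfolding A_def B_def C_def J_def s1_def s2_def s3_def s4_def by (simp_all del: of_nat_Suc)
  have f: "(of_nat ((n+m+1)*(n-m)) :: complex) = (s4 + of_nat k + of_nat m + 1) * (s4 + of_nat k - of_nat m)"
    unfolding s4_def by (simp only: of_nat_mult of_nat_diff[OF less_imp_le[OF assms(2)]]) (simp add: n algebra_simps)
  have "of_nat (Suc k) * cH n m (Suc k) + of_nat k * cH n m k - of_nat m * cH n m k
     = s2 * (s1 * A / ((s2 * B) * (s3 * C) * J)) + of_nat k * (A / (B * C * (s4 * J))) - of_nat m * (A / (B * C * (s4 * J)))"
    unfolding cH_def i fact_Suc' A_def[symmetric] B_def[symmetric] C_def[symmetric] J_def[symmetric]
      s1_def[symmetric] s2_def[symmetric] s3_def[symmetric] s4_def[symmetric] ..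
  also have "\<dots> = (s4 + of_nat k + of_nat m + 1) * (s4 + of_nat k - of_nat m) * (A / (B * (s3 * C) * (s4 * J)))"
  proof -
    have r: "s1 = 2 * of_nat k + s4 + 1" "s3 = of_nat k + of_nat m + 1" "s2 = of_nat k + 1"
      unfolding s1_def s3_def s4_def s2_def n by simp_all
    show ?thesis using nz apply (simp add: field_simps) unfolding r by algebra
  qed
  also have "\<dots> = of_nat ((n+m+1)*(n-m)) * cH n (Suc m) k"
    unfolding f cH_def i fact_Suc' A_def[symmetric] B_def[symmetric] C_def[symmetric] J_def[symmetric]
      s1_def[symmetric] s2_def[symmetric] s3_def[symmetric] s4_def[symmetric] ..
  finally show ?thesis .
qed

lemma coeff_lin_pderiv: "coeff ([:1,1:] * pderiv q) k = of_nat (Suc k) * coeff q (Suc k) + of_nat k * coeff q k"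
  for q :: "complex poly"
  by (cases k) (simp_all add: coeff_lin coeff_pderiv)

lemma PH_eq:
  assumes "m < n"
  shows "of_nat (Suc n) * 0 + of_nat n * cH n m n - of_nat m * cH n m n
       = of_nat ((n+m+1)*(n-m)) * cH n (Suc m) n"
proof -
  define A where "A = (of_nat (fact (n+n)) :: complex)"
  define B where "B = (of_nat (fact n) :: complex)"
  define C where "C = (of_nat (fact (n+m)) :: complex)"
  define s where "s = (of_nat (Suc (n+m)) :: complex)"
  have nz: "A \<noteq> 0" "B \<noteq> 0" "C \<noteq> 0" "s \<noteq> 0"
    unfolding A_def B_def C_def s_def by (simp_all del: of_nat_Suc)
  have f: "(of_nat ((n+m+1)*(n-m)) :: complex) = s * (of_nat n - of_nat m)"
    unfolding s_def by (simp only: of_nat_mult of_nat_diff[OF less_imp_le[OF assms]]) simp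
  have i: "n + Suc m = Suc (n+m)" by simp
  show ?thesis unfolding f cH_def i fact_Suc' A_def[symmetric] B_def[symmetric] C_def[symmetric]
      s_def[symmetric] using nz by (simp add: field_simps)
qed

lemma PH:
  assumes "m < n"
  shows "[:1,1:] * pderiv (sp (cH n m) n) - smult (of_nat m) (sp (cH n m) n)
       = smult (of_nat ((n+m+1)*(n-m))) (sp (cH n (Suc m)) n)"
proof (rule poly_eqI)
  fix k
  consider "k < n" | "k = n" | "k > n" by arith
  then show "coeff ([:1,1:] * pderiv (sp (cH n m) n) - smult (of_nat m) (sp (cH n m) n)) k
       = coeff (smult (of_nat ((n+m+1)*(n-m))) (sp (cH n (Suc m)) n)) k"
  proof cases
    case 1
    then show ?thesis using PH_lt[OF 1 assms]
      by (simp only: coeff_diff coeff_smult coeff_lin_pderiv coeff_sp) simp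
  next
    case 2
    then show ?thesis using PH_eq[OF assms]
      by (simp only: coeff_diff coeff_smult coeff_lin_pderiv coeff_sp) simp
  next
    case 3
    then show ?thesis
      by (simp only: coeff_diff coeff_smult coeff_lin_pderiv coeff_sp) simp
  qed
qed

lemma dig_step: "Digamma (of_nat (Suc (Suc x)) :: complex) = Digamma (of_nat (Suc x)) + 1 / of_nat (Suc x)"
proof -
  have "(of_nat (Suc x) :: complex) \<noteq> 0" by (simp del: of_nat_Suc)
  from Digamma_plus1[OF this] show ?thesis by (simp add: add.commute)
qed

lemma PB_lt:
  assumes "k < n" "m < n"
  shows "of_nat ((n+m+1)*(n-m)) * cB n (Suc m) k + of_nat m * cB n m k
     - (of_nat (Suc k) * cB n m (Suc k) + of_nat k * cB n m k)
     = cH n m k - of_nat (2*m+1) * cH n (Suc m) k"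
proof -
  define j where "j = n - Suc k"
  have n: "n = k + Suc j" using assms(1) unfolding j_def by simp
  have i: "Suc k + n = Suc (k+n)" "Suc k + m = Suc (k+m)" "n - Suc k = j" "n - k = Suc j" "k + Suc m = Suc (k+m)"
     "k + m + 1 = Suc (k+m)" "Suc (k+m) + 1 = Suc (Suc (k+m))"
    using n by auto
  define A where "A = (of_nat (fact (k+n)) :: complex)"
  define B where "B = (of_nat (fact k) :: complex)"
  define C where "C = (of_nat (fact (k+m)) :: complex)"
  define J where "J = (of_nat (fact j) :: complex)"
  define s1 where "s1 = (of_nat (Suc (k+n)) :: complex)"
  define s2 where "s2 = (of_nat (Suc k) :: complex)"
  define s3 where "s3 = (of_nat (Suc (k+m)) :: complex)"
  define s4 where "s4 = (of_nat (Suc j) :: complex)"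
  define D where "D = Digamma s3"
  have nz: "A \<noteq> 0" "B \<noteq> 0" "C \<noteq> 0" "J \<noteq> 0" "s1 \<noteq> 0" "s2 \<noteq> 0" "s3 \<noteq> 0" "s4 \<noteq> 0"
    unfolding A_def B_def C_def J_def s1_def s2_def s3_def s4_def by (simp_all del: of_nat_Suc)
  have f: "(of_nat ((n+m+1)*(n-m)) :: complex) = (s4 + of_nat k + of_nat m + 1) * (s4 + of_nat k - of_nat m)"
    unfolding s4_def by (simp only: of_nat_mult of_nat_diff[OF less_imp_le[OF assms(2)]]) (simp add: n algebra_simps)
  have g: "(of_nat (2*m+1) :: complex) = 2 * of_nat m + 1" by simp
  have r: "s1 = 2 * of_nat k + s4 + 1" "s3 = of_nat k + of_nat m + 1" "s2 = of_nat k + 1"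
      unfolding s1_def s3_def s4_def s2_def n by simp_all
  show ?thesis
    unfolding f g unfolding cH_def cB_def unfolding i fact_Suc' dig_step A_def[symmetric] B_def[symmetric] C_def[symmetric] J_def[symmetric]
      s1_def[symmetric] s2_def[symmetric] s3_def[symmetric] s4_def[symmetric]
    unfolding D_def[symmetric] using nz apply (simp add: field_simps) unfolding r by algebra
qed

lemma PB_eq:
  assumes "m < n"
  shows "of_nat ((n+m+1)*(n-m)) * cB n (Suc m) n + of_nat m * cB n m n
     - (of_nat (Suc n) * 0 + of_nat n * cB n m n)
     = cH n m n - of_nat (2*m+1) * cH n (Suc m) n"
proof -
  define A where "A = (of_nat (fact (n+n)) :: complex)"
  define B where "B = (of_nat (fact n) :: complex)"
  define C where "C = (of_nat (fact (n+m)) :: complex)"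
  define s where "s = (of_nat (Suc (n+m)) :: complex)"
  define D where "D = Digamma s"
  have nz: "A \<noteq> 0" "B \<noteq> 0" "C \<noteq> 0" "s \<noteq> 0"
    unfolding A_def B_def C_def s_def by (simp_all del: of_nat_Suc)
  have f: "(of_nat ((n+m+1)*(n-m)) :: complex) = s * (of_nat n - of_nat m)"
    unfolding s_def by (simp only: of_nat_mult of_nat_diff[OF less_imp_le[OF assms]]) simp
  have g: "(of_nat (2*m+1) :: complex) = 2 * of_nat m + 1" by simp
  have r: "s = of_nat n + of_nat m + 1" unfolding s_def by simp
  have i: "n + Suc m = Suc (n+m)" "n + m + 1 = Suc (n+m)" "Suc (n+m) + 1 = Suc (Suc (n+m))" by simp_all
  show ?thesis unfolding f g unfolding cH_def cB_def unfolding i fact_Suc' dig_step A_def[symmetric] B_def[symmetric] C_def[symmetric]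
      s_def[symmetric] unfolding D_def[symmetric] using nz apply (simp add: field_simps) unfolding r by algebra
qed

lemma PB:
  assumes "m < n"
  shows "smult (of_nat ((n+m+1)*(n-m))) (sp (cB n (Suc m)) n) + smult (of_nat m) (sp (cB n m) n)
       - [:1,1:] * pderiv (sp (cB n m) n)
       = sp (cH n m) n - smult (of_nat (2*m+1)) (sp (cH n (Suc m)) n)"
proof (rule poly_eqI)
  fix k
  consider "k < n" | "k = n" | "k > n" by arith
  then show "coeff (smult (of_nat ((n+m+1)*(n-m))) (sp (cB n (Suc m)) n) + smult (of_nat m) (sp (cB n m) n)
       - [:1,1:] * pderiv (sp (cB n m) n)) k
       = coeff (sp (cH n m) n - smult (of_nat (2*m+1)) (sp (cH n (Suc m)) n)) k"
  proof cases
    case 1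
    then show ?thesis using PB_lt[OF 1 assms]
      by (simp only: coeff_add coeff_diff coeff_smult coeff_lin_pderiv coeff_sp) simp
  next
    case 2
    then show ?thesis using PB_eq[OF assms]
      by (simp only: coeff_add coeff_diff coeff_smult coeff_lin_pderiv coeff_sp) simp
  next
    case 3
    then show ?thesis
      by (simp only: coeff_add coeff_diff coeff_smult coeff_lin_pderiv coeff_sp) simp
  qed
qed




definition Lx :: "nat \<Rightarrow> complex poly \<Rightarrow> complex poly" where
  "Lx n q = [:0,-1,-1:] * pderiv (pderiv q) - [:1,2:] * pderiv q + smult (of_nat (n*(n+1))) q"

definition Lz :: "nat \<Rightarrow> complex poly \<Rightarrow> complex poly" where
  "Lz n p = [:1,0,-1:] * pderiv (pderiv p) - [:0,2:] * pderiv p + smult (of_nat (n*(n+1))) p"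

lemma coeff_Lx: "coeff (Lx n q) k = - (of_nat (Suc k) * of_nat (Suc k)) * coeff q (Suc k)
   + (of_nat (n*(n+1)) - of_nat (k*(k+1))) * coeff q k"
  unfolding Lx_def
  by (cases k; cases "k - 1")
     (auto simp: coeff_pderiv mult_pCons_left algebra_simps)

lemma coeff_Lz: "coeff (Lz n p) j = of_nat ((j+1)*(j+2)) * coeff p (j+2)
   + (of_nat (n*(n+1)) - of_nat (j*(j+1))) * coeff p j"
  unfolding Lz_def
  by (cases j; cases "j - 1")
     (auto simp: coeff_pderiv mult_pCons_left algebra_simps)

lemma fnz: "(of_nat (fact N) :: complex) \<noteq> 0" by simp

definition la :: "nat \<Rightarrow> nat \<Rightarrow> complex" where
  "la n k = (-1)^k * of_nat (fact (2*n - 2*k)) / (2^n * of_nat (fact k) * of_nat (fact (n - k)) * of_nat (fact (n - 2*k)))"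

lemma legendre_la: "legendreP n z = (\<Sum>k\<le>n div 2. la n k * z^(n - 2*k))"
  by (simp add: legendreP_def la_def)

lemma la_rec:
  assumes n: "n = j + 2*Suc i"
  shows "of_nat ((j+1)*(j+2)) * la n i + (of_nat (n*(n+1)) - of_nat (j*(j+1))) * la n (Suc i) = 0"
proof -
  define F1 where "F1 = (of_nat (fact (2*j+2*i+2)) :: complex)"
  define G where "G = (of_nat (fact i) :: complex)"
  define H where "H = (of_nat (fact (j+i)) :: complex)"
  define J where "J = (of_nat (fact j) :: complex)"
  define P where "P = (2^n :: complex)"
  define u1 where "u1 = (of_nat (Suc (2*j+2*i+2)) :: complex)"
  define u2 where "u2 = (of_nat (Suc (Suc (2*j+2*i+2))) :: complex)"
  define t1 where "t1 = (of_nat (Suc (j+i)) :: complex)"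
  define t2 where "t2 = (of_nat (Suc (Suc (j+i))) :: complex)"
  define v1 where "v1 = (of_nat (Suc j) :: complex)"
  define v2 where "v2 = (of_nat (Suc (Suc j)) :: complex)"
  define w where "w = (of_nat (Suc i) :: complex)"
  have nz0: "F1 \<noteq> 0" unfolding F1_def by (rule fnz)
  have nz: "G \<noteq> 0" "H \<noteq> 0" "J \<noteq> 0" "P \<noteq> 0" "u1 \<noteq> 0" "u2 \<noteq> 0" "t1 \<noteq> 0"
    "t2 \<noteq> 0" "v1 \<noteq> 0" "v2 \<noteq> 0" "w \<noteq> 0"
    unfolding G_def H_def J_def P_def u1_def u2_def t1_def t2_def v1_def v2_def w_def
    by (simp_all del: of_nat_Suc)
  have e1: "2*n - 2*i = Suc (Suc (2*j+2*i+2))" "n - i = Suc (Suc (j+i))" "n - 2*i = Suc (Suc j)"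
    "2*n - 2*Suc i = 2*j+2*i+2" "n - Suc i = Suc (j+i)" "n - 2*Suc i = j" using n by auto
  have h: "(of_nat (fact (2*n - 2*i)) :: complex) = u2 * (u1 * F1)"
     "(of_nat (fact (n - i)) :: complex) = t2 * (t1 * H)"
     "(of_nat (fact (n - 2*i)) :: complex) = v2 * (v1 * J)"
     "(of_nat (fact (2*n - 2*Suc i)) :: complex) = F1"
     "(of_nat (fact (Suc i)) :: complex) = w * G"
     "(of_nat (fact (n - Suc i)) :: complex) = t1 * H"
     "(of_nat (fact (n - 2*Suc i)) :: complex) = J"
    unfolding e1 F1_def G_def H_def J_def u1_def u2_def t1_def t2_def v1_def v2_def w_def
    by (simp_all only: fact_Suc')
  have f: "(of_nat (n*(n+1)) - of_nat (j*(j+1)) :: complex) = (2* of_nat i + 2) * (2* of_nat j + 2* of_nat i + 3)"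
    unfolding n by (simp add: algebra_simps)
  have g: "(of_nat ((j+1)*(j+2)) :: complex) = v1 * v2" unfolding v1_def v2_def by (simp add: algebra_simps)
  have r: "u1 = 2* of_nat j+2* of_nat i+3" "u2 = 2* of_nat j+2* of_nat i+4" "t1 = of_nat j + of_nat i + 1"
     "t2 = of_nat j + of_nat i + 2" "v1 = of_nat j + 1" "v2 = of_nat j + 2" "w = of_nat i + 1"
    unfolding u1_def u2_def t1_def t2_def v1_def v2_def w_def by simp_all
  show ?thesis unfolding f g unfolding la_def h G_def[symmetric] P_def[symmetric]
    using nz nz0 apply (simp add: field_simps) unfolding r by algebra
qed

lemma cH_rec:
  assumes "k < n"
  shows "of_nat (Suc k) * of_nat (Suc k) * cH n 0 (Suc k) = (of_nat (n*(n+1)) - of_nat (k*(k+1))) * cH n 0 k"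
proof -
  define j where "j = n - Suc k"
  have n: "n = k + Suc j" using assms(1) unfolding j_def by simp
  define A where "A = (of_nat (fact (k+n)) :: complex)"
  define B where "B = (of_nat (fact k) :: complex)"
  define J where "J = (of_nat (fact j) :: complex)"
  define s1 where "s1 = (of_nat (Suc (k+n)) :: complex)"
  define s2 where "s2 = (of_nat (Suc k) :: complex)"
  define s4 where "s4 = (of_nat (Suc j) :: complex)"
  have nz: "A \<noteq> 0" "B \<noteq> 0" "J \<noteq> 0" "s1 \<noteq> 0" "s2 \<noteq> 0" "s4 \<noteq> 0"
    unfolding A_def B_def J_def s1_def s2_def s4_def by (simp_all del: of_nat_Suc)
  have e1: "Suc k + n = Suc (k+n)" "n - Suc k = j" "n - k = Suc j" "Suc k + 0 = Suc k" "k + 0 = k" using n by auto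
  have h: "(of_nat (fact (Suc k + n)) :: complex) = s1 * A"
    "(of_nat (fact (Suc k + 0)) :: complex) = s2 * B"
    "(of_nat (fact (Suc k)) :: complex) = s2 * B"
    "(of_nat (fact (n - Suc k)) :: complex) = J"
    "(of_nat (fact (n - k)) :: complex) = s4 * J"
    "(of_nat (fact (k + 0)) :: complex) = B"
    unfolding e1 A_def B_def J_def s1_def s2_def s4_def by (simp_all only: fact_Suc')
  have f: "(of_nat (n*(n+1)) - of_nat (k*(k+1)) :: complex) = s4 * s1"
    unfolding s4_def s1_def n by (simp add: algebra_simps)
  show ?thesis unfolding f unfolding cH_def h A_def[symmetric] B_def[symmetric] s2_def[symmetric]
    using nz by (simp add: field_simps)
qed

lemma Lx_zero: "Lx n (sp (cH n 0) n) = 0"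
proof (rule poly_eqI)
  fix k
  consider "k < n" | "k = n" | "k > n" by arith
  then show "coeff (Lx n (sp (cH n 0) n)) k = coeff 0 k"
  proof cases
    case 1 then show ?thesis unfolding coeff_Lx coeff_sp using cH_rec[OF 1] by simp
  next
    case 2 then show ?thesis unfolding coeff_Lx coeff_sp by simp
  next
    case 3 then show ?thesis unfolding coeff_Lx coeff_sp by simp
  qed
qed

definition cz :: "nat \<Rightarrow> nat \<Rightarrow> complex" where
  "cz n j = (if even (n - j) then la n ((n - j) div 2) else 0)"

lemma Lz_zero: "Lz n (sp (cz n) n) = 0"
proof (rule poly_eqI)
  fix j
  show "coeff (Lz n (sp (cz n) n)) j = coeff 0 j"
  proof (cases "j < n \<and> even (n - j)")
    case True
    obtain q where q: "n - j = 2*q" using True[THEN conjunct2] evenE by blast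
    define i where "i = q - 1"
    have n: "n = j + 2 * Suc i" using True q unfolding i_def by simp
    have a: "j + 2 \<le> n" "even (n - (j+2))" "(n - (j+2)) div 2 = i" "(n - j) div 2 = Suc i" "j \<le> n"
       "even (n - j)"
      using n by auto
    show ?thesis unfolding coeff_Lz coeff_sp cz_def using a la_rec[OF n] by simp
  next
    case False
    then consider "j < n" "odd (n - j)" | "j = n" | "j > n" by arith
    then show ?thesis
    proof cases
      case 1
      have "j + 2 \<le> n \<Longrightarrow> odd (n - (j+2))" using 1 by (auto elim!: oddE)
      then show ?thesis unfolding coeff_Lz coeff_sp cz_def using 1 by auto
    qed (auto simp: coeff_Lz coeff_sp)
  qed
qed

lemma poly_pz: "poly (sp (cz n) n) w = legendreP n w"
proof -
  have inj: "inj_on (\<lambda>k. n - 2*k) {..n div 2}" by (auto simp: inj_on_def)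
  have "legendreP n w = (\<Sum>j\<in>(\<lambda>k. n - 2*k) ` {..n div 2}. cz n j * w^j)"
    unfolding legendre_la sum.reindex[OF inj] o_def
  proof (rule sum.cong[OF refl])
    fix k assume "k \<in> {..n div 2}"
    then have "2*k \<le> n" by auto
    then have "n - (n - 2*k) = 2*k" by auto
    then show "la n k * w ^ (n - 2 * k) = cz n (n - 2 * k) * w ^ (n - 2 * k)"
      unfolding cz_def by simp
  qed
  also have "\<dots> = (\<Sum>j\<le>n. cz n j * w^j)"
  proof (rule sum.mono_neutral_left)
    show "\<forall>i\<in>{..n} - (\<lambda>k. n - 2 * k) ` {..n div 2}. cz n i * w ^ i = 0"
    proof
      fix j assume j: "j \<in> {..n} - (\<lambda>k. n - 2 * k) ` {..n div 2}"
      have "odd (n - j)"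
      proof
        assume "even (n - j)"
        then obtain q where q: "n - j = 2*q" using evenE by blast
        then have "q \<in> {..n div 2}" "j = n - 2*q" using j by auto
        then show False using j by auto
      qed
      then show "cz n j * w ^ j = 0" unfolding cz_def by simp
    qed
  qed auto
  finally show ?thesis unfolding poly_sp by simp
qed

definition Xp :: "complex poly" where "Xp = [:-1/2, 1/2:]"

lemma poly_Xp: "poly Xp w = (w - 1)/2" by (simp add: Xp_def field_simps)

lemma pderiv_compX: "pderiv (pcompose p Xp) = smult (1/2) (pcompose (pderiv p) Xp)"
  by (simp add: pderiv_pcompose Xp_def pderiv_pCons)

lemma Lz_comp: "Lz n (pcompose q Xp) = 0" if "Lx n q = 0"
proof -
  have "poly (Lz n (pcompose q Xp)) w = poly (Lx n q) ((w - 1)/2)" for w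
    unfolding Lz_def Lx_def pderiv_compX pderiv_smult
    by (simp add: poly_pcompose poly_Xp algebra_simps power2_eq_square) (simp add: field_simps)
  then have "poly (Lz n (pcompose q Xp)) = poly 0" using that by auto
  then show ?thesis using poly_eq_poly_eq_iff by blast
qed

lemma Lz_diff: "Lz n (p - q) = Lz n p - Lz n q"
  unfolding Lz_def by (simp add: pderiv_diff algebra_simps smult_diff_right)

lemma degree_sp: "degree (sp c N) \<le> N"
  by (rule degree_le) (simp add: coeff_sp)

lemma Lz_unique:
  assumes "Lz n d = 0" "degree d \<le> n" "coeff d n = 0"
  shows "d = 0"
proof (rule ccontr)
  assume d: "d \<noteq> 0"
  define j where "j = degree d"
  have lc: "coeff d j \<noteq> 0" using d unfolding j_def by simp
  have jn: "j < n" using assms(2,3) lc unfolding j_def by (cases "degree d = n") auto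
  have "coeff d (j+2) = 0" unfolding j_def by (rule coeff_eq_0) simp
  then have "coeff (Lz n d) j = (of_nat (n*(n+1)) - of_nat (j*(j+1))) * coeff d j"
    unfolding coeff_Lz by simp
  moreover have "j*(j+1) < n*(n+1)" using jn by (intro mult_strict_mono) auto
  then have "(of_nat (n*(n+1)) - of_nat (j*(j+1)) :: complex) \<noteq> 0"
    by (metis eq_iff_diff_eq_0 less_irrefl of_nat_eq_iff)
  ultimately have "coeff (Lz n d) j \<noteq> 0" using lc by simp
  then show False using assms(1) by simp
qed

lemma murphy1: "legendreP n w = poly (sp (cH n 0) n) ((w - 1)/2)"
proof -
  define qx where "qx = sp (cH n 0) n"
  define px where "px = pcompose qx Xp"
  have c: "coeff qx n = cH n 0 n" unfolding qx_def coeff_sp by simp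
  have cnz: "cH n 0 n \<noteq> 0" unfolding cH_def by simp
  have dq: "degree qx = n"
    using degree_sp[of "cH n 0" n] le_degree[of qx n] c cnz unfolding qx_def by auto
  have dX: "degree Xp = 1" by (simp add: Xp_def)
  have dp: "degree px = n" unfolding px_def degree_pcompose dq dX by simp
  have "coeff px n = cH n 0 n * (1/2)^n"
    using lead_coeff_comp[of Xp qx] dX dq c unfolding px_def[symmetric] dp by (simp add: Xp_def)
  also have "\<dots> = cz n n" unfolding cz_def la_def cH_def by (simp add: mult_2_right field_simps)
  finally have cpx: "coeff px n = cz n n" .
  have "sp (cz n) n - px = 0"
  proof (rule Lz_unique[of n])
    show "Lz n (sp (cz n) n - px) = 0" unfolding Lz_diff Lz_zero px_def qx_def
      using Lz_comp[OF Lx_zero] by simp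
    show "degree (sp (cz n) n - px) \<le> n"
      using degree_diff_le[OF degree_sp[of "cz n" n] ] dp by simp
    show "coeff (sp (cz n) n - px) n = 0" using cpx by (simp add: coeff_sp)
  qed
  then have "sp (cz n) n = px" by simp
  then show ?thesis using poly_pz[of n w] unfolding px_def qx_def by (simp add: poly_pcompose poly_Xp)
qed

lemma legendre_parity: "legendreP n z = (-1)^n * legendreP n (-z)"
  unfolding legendre_la sum_distrib_left
proof (rule sum.cong[OF refl])
  fix k assume "k \<in> {..n div 2}"
  then have "n = (n - 2*k) + 2*k" by auto
  then have "(-1::complex)^n * (-1)^(n-2*k) = 1"
    by (metis power_add power_mult_distrib power_mult neg_one_even_power even_mult_iff even_add dvd_triv_left mult_2)
  then show "la n k * z ^ (n - 2 * k) = (-1) ^ n * (la n k * (- z) ^ (n - 2 * k))"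
    by (simp add: power_minus[of z] algebra_simps)
qed

lemma murphy:
  assumes "e = 1 \<or> e = -1"
  shows "legendreP n z = e^n * poly (sp (cH n 0) n) ((e*z - 1)/2)"
  using assms
proof
  assume "e = 1" then show ?thesis using murphy1 by simp
next
  assume e: "e = -1"
  show ?thesis unfolding e using legendre_parity[of n z] murphy1[of n "-z"] by simp
qed




lemma poly_y_deriv:
  "((\<lambda>z. poly p ((e*z-1)/2)) has_field_derivative poly (pderiv p) ((e*z-1)/2) * (e/2)) (at z)"
proof -
  have d: "((\<lambda>z. (e*z-1)/2) has_field_derivative e/2) (at z)"
    by (rule derivative_eq_intros refl | simp)+
  show ?thesis using DERIV_chain2[OF poly_DERIV d] .
qed

lemma div_pow_deriv:
  fixes g :: "complex \<Rightarrow> complex" and e z g' :: complex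
  assumes g: "(g has_field_derivative g') (at z)" and nz: "z + e \<noteq> 0"
  shows "((\<lambda>z. g z / (z+e)^m) has_field_derivative (g' * (z+e) - of_nat m * g z)/(z+e)^Suc m) (at z)"
proof -
  have p: "((\<lambda>z. (z+e)^m) has_field_derivative of_nat m * ((1+0) * (z+e)^(m - Suc 0))) (at z)"
    by (intro DERIV_power DERIV_add DERIV_ident DERIV_const)
  have pnz: "(z+e)^m \<noteq> 0" using nz by simp
  have "((\<lambda>z. g z / (z+e)^m) has_field_derivative
      (g' * (z+e)^m - g z * (of_nat m * ((1+0) * (z+e)^(m - Suc 0)))) / ((z+e)^m * (z+e)^m)) (at z)"
    by (rule DERIV_divide[OF g p pnz])
  moreover have "(g' * (z+e)^m - g z * (of_nat m * ((1+0) * (z+e)^(m - Suc 0)))) / ((z+e)^m * (z+e)^m)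
      = (g' * (z+e) - of_nat m * g z)/(z+e)^Suc m"
  proof (cases m)
    case 0 then show ?thesis using nz by (simp add: field_simps)
  next
    case (Suc k)
    define W where "W = z + e"
    define P where "P = W^k"
    have nz': "W \<noteq> 0" "P \<noteq> 0" using nz unfolding W_def P_def by auto
    have "(g' * (z+e)^m - g z * (of_nat m * ((1+0) * (z+e)^(m - Suc 0)))) / ((z+e)^m * (z+e)^m)
      = (P * (g' * W - of_nat m * g z)) / (P * (W * W * P))"
      unfolding W_def[symmetric] Suc P_def by (simp add: algebra_simps)
    also have "\<dots> = (g' * W - of_nat m * g z) / (W * W * P)" using nz' by simp
    also have "\<dots> = (g' * (z+e) - of_nat m * g z)/(z+e)^Suc m"
      unfolding W_def[symmetric] Suc P_def by (simp add: algebra_simps)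
    finally show ?thesis .
  qed
  ultimately show ?thesis by simp
qed

definition Kc :: "nat \<Rightarrow> nat \<Rightarrow> complex" where
  "Kc n m = of_nat (fact (n+m)) / of_nat (fact (n-m))"

lemma Kc_Suc:
  assumes "m < n"
  shows "Kc n (Suc m) = Kc n m * of_nat ((n+m+1)*(n-m))"
proof -
  have i: "n + Suc m = Suc (n+m)" "n - m = Suc (n - Suc m)" using assms by auto
  define s where "s = (of_nat (Suc (n - Suc m)) :: complex)"
  have snz: "s \<noteq> 0" unfolding s_def by (simp del: of_nat_Suc)
  have f: "(of_nat ((n+m+1)*(n-m)) :: complex) = of_nat (Suc (n+m)) * s"
    unfolding s_def i(2) by (simp only: of_nat_mult Suc_eq_plus1)
  show ?thesis unfolding Kc_def f unfolding i fact_Suc' s_def[symmetric] using snz fnz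
    by (simp add: field_simps)
qed

definition Vf :: "nat \<Rightarrow> complex \<Rightarrow> nat \<Rightarrow> complex \<Rightarrow> complex" where
  "Vf n e m z = (e^n * Kc n m * poly (sp (cH n m) n) ((e*z-1)/2)) / (z+e)^m"
definition Af :: "nat \<Rightarrow> complex \<Rightarrow> nat \<Rightarrow> complex \<Rightarrow> complex" where
  "Af n e m z = e^(n+m)/2^m * poly (sp (cA n m) (n-m)) ((e*z-1)/2)"
definition Bf :: "nat \<Rightarrow> complex \<Rightarrow> nat \<Rightarrow> complex \<Rightarrow> complex" where
  "Bf n e m z = (e^n * Kc n m * poly (sp (cB n m) n) ((e*z-1)/2)) / (z+e)^m"

lemma DA:
  assumes "m < n" "e*e = 1"
  shows "((\<lambda>z. Af n e m z) has_field_derivative Af n e (Suc m) z) (at z)"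
proof -
  have "((\<lambda>z. Af n e m z) has_field_derivative
      e^(n+m)/2^m * (poly (pderiv (sp (cA n m) (n-m))) ((e*z-1)/2) * (e/2))) (at z)"
    unfolding Af_def by (intro DERIV_cmult poly_y_deriv)
  moreover have "e^(n+m)/2^m * (poly (pderiv (sp (cA n m) (n-m))) ((e*z-1)/2) * (e/2)) = Af n e (Suc m) z"
    unfolding PA[OF assms(1)] Af_def by (simp add: field_simps)
  ultimately show ?thesis by simp
qed

lemma y1: "e*e = 1 \<Longrightarrow> e/2 * (z+e) = (e*z-1)/2 + 1" for e z :: complex
  by (simp add: field_simps)

lemma DV:
  assumes "m < n" "e*e = 1" "z + e \<noteq> 0"
  shows "((\<lambda>z. Vf n e m z) has_field_derivative Vf n e (Suc m) z) (at z)"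
proof -
  let ?C = "e^n * Kc n m" and ?H = "sp (cH n m) n" and ?y = "(e*z-1)/2"
  have g: "((\<lambda>z. ?C * poly ?H ((e*z-1)/2)) has_field_derivative ?C * (poly (pderiv ?H) ?y * (e/2))) (at z)"
    by (intro DERIV_cmult poly_y_deriv)
  have D: "((\<lambda>z. Vf n e m z) has_field_derivative
     (?C * (poly (pderiv ?H) ?y * (e/2)) * (z+e) - of_nat m * (?C * poly ?H ?y))/(z+e)^Suc m) (at z)"
    unfolding Vf_def by (rule div_pow_deriv[OF g assms(3)])
  have "?C * (poly (pderiv ?H) ?y * (e/2)) * (z+e) - of_nat m * (?C * poly ?H ?y)
       = ?C * (poly (pderiv ?H) ?y * (e/2 * (z+e))) - of_nat m * (?C * poly ?H ?y)"
      by (simp only: mult.assoc)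
  also have "\<dots> = ?C * (poly (pderiv ?H) ?y * (?y + 1)) - of_nat m * (?C * poly ?H ?y)"
      unfolding y1[OF assms(2)] ..
  also have "\<dots> = ?C * poly ([:1,1:] * pderiv ?H - smult (of_nat m) ?H) ?y"
    by (simp add: algebra_simps)
  also have "\<dots> = e^n * Kc n (Suc m) * poly (sp (cH n (Suc m)) n) ?y"
    unfolding PH[OF assms(1)] Kc_Suc[OF assms(1)] by simp
  finally have E: "?C * (poly (pderiv ?H) ?y * (e/2)) * (z+e) - of_nat m * (?C * poly ?H ?y)
     = e^n * Kc n (Suc m) * poly (sp (cH n (Suc m)) n) ?y" .
  show ?thesis using D unfolding E Vf_def[of n e "Suc m"] .
qed

lemma DB:
  assumes "m < n" "e*e = 1" "z + e \<noteq> 0"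
  shows "((\<lambda>z. Bf n e m z) has_field_derivative
     Bf n e (Suc m) z - Vf n e m z / (z+e) + of_nat (2*m+1) / of_nat ((n+m+1)*(n-m)) * Vf n e (Suc m) z) (at z)"
proof -
  let ?C = "e^n * Kc n m" and ?G = "sp (cB n m) n" and ?y = "(e*z-1)/2"
  have g: "((\<lambda>z. ?C * poly ?G ((e*z-1)/2)) has_field_derivative ?C * (poly (pderiv ?G) ?y * (e/2))) (at z)"
    by (intro DERIV_cmult poly_y_deriv)
  have D: "((\<lambda>z. Bf n e m z) has_field_derivative
     (?C * (poly (pderiv ?G) ?y * (e/2)) * (z+e) - of_nat m * (?C * poly ?G ?y))/(z+e)^Suc m) (at z)"
    unfolding Bf_def by (rule div_pow_deriv[OF g assms(3)])
  define Q where "Q = (of_nat ((n+m+1)*(n-m)) :: complex)"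
  have Qnz: "Q \<noteq> 0" unfolding Q_def using assms(1) by (simp del: of_nat_mult of_nat_add)
  have "?C * (poly (pderiv ?G) ?y * (e/2)) * (z+e) - of_nat m * (?C * poly ?G ?y)
       = ?C * (poly (pderiv ?G) ?y * (e/2 * (z+e))) - of_nat m * (?C * poly ?G ?y)"
      by (simp only: mult.assoc)
  also have "\<dots> = ?C * (poly (pderiv ?G) ?y * (?y + 1)) - of_nat m * (?C * poly ?G ?y)"
      unfolding y1[OF assms(2)] ..
  also have "\<dots> = ?C * poly ([:1,1:] * pderiv ?G - smult (of_nat m) ?G) ?y"
    by (simp add: algebra_simps)
  also have "[:1,1:] * pderiv ?G - smult (of_nat m) ?G =
     smult Q (sp (cB n (Suc m)) n) - sp (cH n m) n + smult (of_nat (2*m+1)) (sp (cH n (Suc m)) n)"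
    using PB[OF assms(1)] unfolding Q_def by (simp add: algebra_simps)
  finally have E: "?C * (poly (pderiv ?G) ?y * (e/2)) * (z+e) - of_nat m * (?C * poly ?G ?y)
     = ?C * (Q * poly (sp (cB n (Suc m)) n) ?y - poly (sp (cH n m) n) ?y + of_nat (2*m+1) * poly (sp (cH n (Suc m)) n) ?y)"
    by simp
  have K: "Kc n (Suc m) = Kc n m * Q" unfolding Q_def by (rule Kc_Suc[OF assms(1)])
  define W where "W = z + e"
  have Wnz: "W \<noteq> 0" using assms(3) unfolding W_def .
  have "(?C * (Q * poly (sp (cB n (Suc m)) n) ?y - poly (sp (cH n m) n) ?y + of_nat (2*m+1) * poly (sp (cH n (Suc m)) n) ?y)) / (z+e)^Suc m
     = Bf n e (Suc m) z - Vf n e m z / (z+e) + of_nat (2*m+1) / Q * Vf n e (Suc m) z"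
    unfolding Bf_def Vf_def K W_def[symmetric] using Wnz Qnz by (simp add: field_simps)
  then show ?thesis using D unfolding E Q_def by simp
qed

definition Psi :: "nat \<Rightarrow> nat \<Rightarrow> complex" where
  "Psi n m = Digamma (of_nat (n + m + 1)) - 2 * Digamma (of_nat (n + 1)) + Digamma (of_nat (n - m + 1))"

lemma Psi_Suc:
  assumes "m < n"
  shows "Psi n (Suc m) = Psi n m - of_nat (2*m+1) / of_nat ((n+m+1)*(n-m))"
proof -
  define a where "a = (of_nat (Suc (n+m)) :: complex)"
  define b where "b = (of_nat (Suc (n - Suc m)) :: complex)"
  have nz: "a \<noteq> 0" "b \<noteq> 0" unfolding a_def b_def by (simp_all del: of_nat_Suc)
  have i: "n + Suc m + 1 = Suc (Suc (n+m))" "n + m + 1 = Suc (n+m)" "n - m + 1 = Suc (Suc (n - Suc m))"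
    "n - Suc m + 1 = Suc (n - Suc m)" using assms by auto
  have q: "(of_nat ((n+m+1)*(n-m)) :: complex) = a * b"
  proof -
    have "n - m = Suc (n - Suc m)" using assms by auto
    then show ?thesis unfolding a_def b_def by (simp only: of_nat_mult Suc_eq_plus1)
  qed
  have r: "(of_nat (2*m+1) :: complex) = a - b"
  proof -
    have "n + m + 1 = (2*m+1) + (n - m)" "n - m = Suc (n - Suc m)" using assms by auto
    then have "(of_nat (n+m+1) :: complex) = of_nat (2*m+1) + of_nat (Suc (n - Suc m))"
      by (metis of_nat_add)
    then show ?thesis unfolding a_def b_def by (simp add: algebra_simps)
  qed
  show ?thesis unfolding Psi_def q r unfolding i dig_step a_def[symmetric] b_def[symmetric]
    using nz by (simp add: field_simps)
qed

lemma PV: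
  assumes "m \<le> n" "e = 1 \<or> e = -1" "z + e \<noteq> 0"
  shows "Pg n m z = Vf n e m z"
  using assms(1,3)
proof (induction m arbitrary: z)
  case 0
  have "Kc n 0 = 1" unfolding Kc_def by simp
  then show ?case unfolding Pg_0 Vf_def using murphy[OF assms(2)] by simp
next
  case (Suc m)
  have mn: "m < n" using Suc.prems by simp
  have ee: "e * e = 1" using assms(2) by auto
  define S where "S = - {-e}"
  have S: "open S" "z \<in> S" unfolding S_def using Suc.prems(2) by (auto simp: add_eq_0_iff)
  have eqS: "Pg n m x = Vf n e m x" if "x \<in> S" for x
  proof -
    from that have "x \<noteq> -e" unfolding S_def by auto
    then have "x + e \<noteq> 0" by (simp add: add_eq_0_iff2)
    then show ?thesis using Suc.IH[of x] mn by simp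
  qed
  have "((\<lambda>z. Vf n e m z) has_field_derivative Pg n (Suc m) z) (at z)"
    by (rule has_field_derivative_transform_within_open[OF Pg_deriv[OF mn] S eqS])
  then show ?case using DV[OF mn ee Suc.prems(2)] DERIV_unique by blast
qed

definition Rf :: "nat \<Rightarrow> complex \<Rightarrow> nat \<Rightarrow> complex \<Rightarrow> complex" where
  "Rf n e m z = Pg n m z * Ln (z + e) - Psi n m * Pg n m z - Af n e m z + Bf n e m z"

lemma DR:
  assumes "m < n" "e = 1 \<or> e = -1" "z + e \<notin> \<real>\<^sub>\<le>\<^sub>0"
  shows "((\<lambda>z. Rf n e m z) has_field_derivative Rf n e (Suc m) z) (at z)"
proof -
  have ee: "e * e = 1" using assms(2) by auto
  have nz: "z + e \<noteq> 0" using assms(3) by auto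
  have L: "((\<lambda>z. Ln (z + e)) has_field_derivative inverse (z + e) * (1 + 0)) (at z)"
    by (rule DERIV_chain2[OF has_field_derivative_Ln[OF assms(3)] DERIV_add[OF DERIV_ident DERIV_const]])
  have D: "((\<lambda>z. Rf n e m z) has_field_derivative
     (Pg n (Suc m) z * Ln (z + e) + inverse (z + e) * (1 + 0) * Pg n m z)
     - Psi n m * Pg n (Suc m) z - Af n e (Suc m) z
     + (Bf n e (Suc m) z - Vf n e m z / (z+e) + of_nat (2*m+1) / of_nat ((n+m+1)*(n-m)) * Vf n e (Suc m) z)) (at z)"
    unfolding Rf_def
    by (intro DERIV_add DERIV_diff DERIV_mult DERIV_cmult Pg_deriv[OF assms(1)] L DA[OF assms(1) ee] DB[OF assms(1) ee nz])
  have gen: "V1*L + inverse W*(1+0)*V0 - P*V1 - A1 + (B1 - V0/W + c*V1) = V1*L - (P - c)*V1 - A1 + B1"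
    for V0 V1 L P A1 B1 W c :: complex by (simp add: divide_inverse algebra_simps)
  have p0: "Pg n m z = Vf n e m z" using PV[of m n e z] assms(1,2) nz by simp
  have p1: "Pg n (Suc m) z = Vf n e (Suc m) z" using PV[of "Suc m" n e z] assms(1,2) nz by simp
  have "(Pg n (Suc m) z * Ln (z + e) + inverse (z + e) * (1 + 0) * Pg n m z)
     - Psi n m * Pg n (Suc m) z - Af n e (Suc m) z
     + (Bf n e (Suc m) z - Vf n e m z / (z+e) + of_nat (2*m+1) / of_nat ((n+m+1)*(n-m)) * Vf n e (Suc m) z)
     = Rf n e (Suc m) z"
    unfolding Rf_def Psi_Suc[OF assms(1)] p0 p1 by (rule gen)
  then show ?thesis using D by simp
qed

definition S0 :: "complex set" where "S0 = {z. z \<notin> complex_of_real ` {..1}}"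

lemma S0_char: "S0 = - {z. Im z = 0 \<and> Re z \<le> 1}"
proof -
  have "z \<in> complex_of_real ` {..1} \<longleftrightarrow> Im z = 0 \<and> Re z \<le> 1" for z
  proof
    assume "z \<in> complex_of_real ` {..1}" then show "Im z = 0 \<and> Re z \<le> 1" by auto
  next
    assume h: "Im z = 0 \<and> Re z \<le> 1"
    then have "z = complex_of_real (Re z)" by (simp add: complex_eq_iff)
    then show "z \<in> complex_of_real ` {..1}" using h by auto
  qed
  then show ?thesis unfolding S0_def by auto
qed

lemma S0_open: "open S0"
  unfolding S0_char
  by (intro open_Compl closed_Collect_conj closed_Collect_eq closed_Collect_le continuous_intros)

lemma S0_Ln:
  assumes "z \<in> S0" "e = 1 \<or> e = -1"
  shows "z + e \<notin> \<real>\<^sub>\<le>\<^sub>0"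
proof
  assume "z + e \<in> \<real>\<^sub>\<le>\<^sub>0"
  then have "Re (z + e) \<le> 0" "Im (z + e) = 0" by (auto simp: complex_nonpos_Reals_iff)
  then have "Im z = 0 \<and> Re z \<le> 1" using assms(2) by auto
  then show False using assms(1) unfolding S0_char by auto
qed

lemma main_ind:
  assumes "m \<le> n" "e = 1 \<or> e = -1"
  shows "\<forall>z\<in>S0. (deriv ^^ m) (\<lambda>w. legendreP n w * Ln (w + e)) z = Rf n e m z"
  using assms(1)
proof (induction m)
  case 0
  have "Psi n 0 = 0" unfolding Psi_def by simp
  moreover have "Af n e 0 z = Bf n e 0 z" for z
  proof -
    have "cA n 0 = cB n 0" by (rule ext) (simp add: cA_def cB_def)
    moreover have "Kc n 0 = 1" unfolding Kc_def by simp
    ultimately show ?thesis unfolding Af_def Bf_def by simp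
  qed
  ultimately show ?case unfolding Rf_def Pg_0 by simp
next
  case (Suc m)
  have mn: "m < n" using Suc.prems by simp
  show ?case
  proof
    fix z assume z: "z \<in> S0"
    have "((\<lambda>z. (deriv ^^ m) (\<lambda>w. legendreP n w * Ln (w + e)) z) has_field_derivative Rf n e (Suc m) z) (at z)"
      by (rule has_field_derivative_transform_within_open[OF DR[OF mn assms(2) S0_Ln[OF z assms(2)]] S0_open z])
         (use Suc.IH mn in auto)
    then show "(deriv ^^ Suc m) (\<lambda>w. legendreP n w * Ln (w + e)) z = Rf n e (Suc m) z"
      by (simp add: DERIV_imp_deriv)
  qed
qed

theorem mainTheorem2:
  fixes m n :: nat and \<epsilon> :: int and z :: complex
  assumes "m \<le> n"
    and "\<epsilon> \<in> {1, -1}"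
    and "z \<notin> complex_of_real ` {..1}"
  shows "(deriv ^^ m) (\<lambda>w. legendreP n w * Ln (w + of_int \<epsilon>)) z =
      of_nat (fact (2*m)) / (2^m * of_nat (fact m)) * gegenbauerC (n - m) (of_nat m + 1/2) z * Ln (z + of_int \<epsilon>)
    - of_nat (fact (2*m)) / (2^m * of_nat (fact m))
        * (Digamma (of_nat (n + m + 1)) - 2 * Digamma (of_nat (n + 1)) + Digamma (of_nat (n - m + 1)))
        * gegenbauerC (n - m) (of_nat m + 1/2) z
    - of_int \<epsilon> ^ (n + m) / 2^m * (\<Sum>k = 0..n - m. of_int \<epsilon> ^ k
        * of_nat (fact (k + n + m)) * Digamma (of_nat (k + m + 1))
        / (of_nat (fact k) * of_nat (fact (k + m)) * of_nat (fact (n - m - k)))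
        * ((z - of_int \<epsilon>) / 2) ^ k)
    + of_int \<epsilon> ^ n * of_nat (fact (n + m)) / of_nat (fact (n - m)) / (z + of_int \<epsilon>) ^ m
        * (\<Sum>k = 0..n. of_int \<epsilon> ^ k
        * of_nat (fact (k + n)) * Digamma (of_nat (k + m + 1))
        / (of_nat (fact k) * of_nat (fact (k + m)) * of_nat (fact (n - k)))
        * ((z - of_int \<epsilon>) / 2) ^ k)"
proof -
  define e where "e = (of_int \<epsilon> :: complex)"
  have e1: "e = 1 \<or> e = -1" using assms(2) unfolding e_def by auto
  have ee: "e * e = 1" using e1 by auto
  have zS: "z \<in> S0" using assms(3) unfolding S0_def by simp
  have L: "(deriv ^^ m) (\<lambda>w. legendreP n w * Ln (w + e)) z = Rf n e m z"
    using main_ind[OF assms(1) e1] zS by blast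
  define X where "X = (z - e)/2"
  have yy: "(e*z-1)/2 = e * X" using ee unfolding X_def by (simp add: field_simps)
  have SA: "poly (sp (cA n m) (n-m)) ((e*z-1)/2) = (\<Sum>k = 0..n - m. e ^ k
        * of_nat (fact (k + n + m)) * Digamma (of_nat (k + m + 1))
        / (of_nat (fact k) * of_nat (fact (k + m)) * of_nat (fact (n - m - k)))
        * X ^ k)"
    unfolding poly_sp yy atLeast0AtMost
    by (rule sum.cong[OF refl]) (simp add: cA_def power_mult_distrib)
  have SB: "poly (sp (cB n m) n) ((e*z-1)/2) = (\<Sum>k = 0..n. e ^ k
        * of_nat (fact (k + n)) * Digamma (of_nat (k + m + 1))
        / (of_nat (fact k) * of_nat (fact (k + m)) * of_nat (fact (n - k)))
        * X ^ k)"
    unfolding poly_sp yy atLeast0AtMost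
    by (rule sum.cong[OF refl]) (simp add: cB_def power_mult_distrib)
  let ?c = "of_nat (fact (2*m)) / (2^m * of_nat (fact m)) :: complex"
  let ?G = "gegenbauerC (n - m) (of_nat m + 1/2) z"
  let ?Q = "Digamma (of_nat (n + m + 1)) - 2 * Digamma (of_nat (n + 1)) + Digamma (of_nat (n - m + 1)) :: complex"
  have P1: "Pg n m z * Ln (z + e) = ?c * ?G * Ln (z + e)" unfolding Pg_def ..
  have P2: "Psi n m * Pg n m z = ?c * ?Q * ?G" unfolding Pg_def Psi_def by (simp only: ac_simps)
  have A: "Af n e m z = e ^ (n + m) / 2^m * (\<Sum>k = 0..n - m. e ^ k
        * of_nat (fact (k + n + m)) * Digamma (of_nat (k + m + 1))
        / (of_nat (fact k) * of_nat (fact (k + m)) * of_nat (fact (n - m - k)))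
        * X ^ k)" unfolding Af_def SA ..
  have B: "Bf n e m z = e ^ n * of_nat (fact (n + m)) / of_nat (fact (n - m)) / (z + e) ^ m
        * (\<Sum>k = 0..n. e ^ k
        * of_nat (fact (k + n)) * Digamma (of_nat (k + m + 1))
        / (of_nat (fact k) * of_nat (fact (k + m)) * of_nat (fact (n - k)))
        * X ^ k)" unfolding Bf_def SB Kc_def by simp
  show ?thesis unfolding e_def[symmetric] X_def[symmetric] L Rf_def P1 P2 A B ..
qed


end
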